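(* Let $S_0$ be a nonempty set, let $S$ be the collection of all finite subsets of $S_0$, partially ordered by set inclusion, and let $\mathcal{G}$ be any group acting on $S_0$, with the action extended to $S$ by $Ta = \{Tx : x \in a\}$ for $a \in S$, $T \in \mathcal{G}$. Then on the quotient $S/\mathcal{G}$ (the set of orbits of this action) the strong relation ($A \preceq B$ iff for all $a \in A$ there is $b \in B$ with $a \subseteq b$) and the weak relation ($A \preceq B$ iff there exist $a \in A$, $b \in B$ with $a \subseteq b$) are identical, and this relation is a partial order on $S/\mathcal{G}$. *)

theory Defs
  imports "HOL-Algebra.Group_Action"
begin

definition fin_subsets :: "'b set \<Rightarrow> 'b set set" where
  "fin_subsets S0 = {a. a \<subseteq> S0 \<and> finite a}"

definition set_action :: "('a \<Rightarrow> 'b \<Rightarrow> 'b) \<Rightarrow> 'a \<Rightarrow> 'b set \<Rightarrow> 'b set" where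
  "set_action \<phi> g a = \<phi> g ` a"

definition strong_rel :: "'b set set \<Rightarrow> 'b set set \<Rightarrow> bool" where
  "strong_rel A B \<longleftrightarrow> (\<forall>a\<in>A. \<exists>b\<in>B. a \<subseteq> b)"

definition weak_rel :: "'b set set \<Rightarrow> 'b set set \<Rightarrow> bool" where
  "weak_rel A B \<longleftrightarrow> (\<exists>a\<in>A. \<exists>b\<in>B. a \<subseteq> b)"

end

theory Submission
  imports Defs
begin

context group_action
begin

lemma grp: "group G"
  using group_hom group_hom.axioms(1) by blast

lemma img_comp:
  assumes "a \<subseteq> E" "g \<in> carrier G" "h \<in> carrier G"
  shows "\<phi> h ` (\<phi> g ` a) = \<phi> (h \<otimes> g) ` a"
  using assms composition_rule by (auto simp: image_image subset_iff)

lemma img_one: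
  assumes "a \<subseteq> E"
  shows "\<phi> \<one> ` a = a"
proof -
  have "\<And>x. x \<in> E \<Longrightarrow> \<phi> \<one> x = x" using id_eq_one by (metis restrict_apply')
  thus ?thesis using assms by (force simp: subset_iff image_iff)
qed

lemma img_sub: "a \<subseteq> E \<Longrightarrow> g \<in> carrier G \<Longrightarrow> \<phi> g ` a \<subseteq> E"
  using surj_prop by blast

lemma orb_elem:
  assumes "A \<in> orbits G (fin_subsets E) (set_action \<phi>)" "a \<in> A"
  shows "a \<in> fin_subsets E \<and> A = {\<phi> g ` a | g. g \<in> carrier G}"
proof -
  interpret group G by (rule grp)
  obtain a0 where a0: "a0 \<in> fin_subsets E" "A = {\<phi> g ` a0 | g. g \<in> carrier G}"
    using assms(1) unfolding orbits_def orbit_def set_action_def by blast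
  obtain g1 where g1: "g1 \<in> carrier G" "a = \<phi> g1 ` a0" using a0 assms(2) by blast
  have a0E: "a0 \<subseteq> E" "finite a0" using a0 by (auto simp: fin_subsets_def)
  have "a \<in> fin_subsets E" using g1 a0E img_sub by (auto simp: fin_subsets_def)
  moreover have "A = {\<phi> g ` a | g. g \<in> carrier G}"
  proof
    show "A \<subseteq> {\<phi> g ` a | g. g \<in> carrier G}"
    proof
      fix x assume "x \<in> A"
      then obtain g2 where g2: "g2 \<in> carrier G" "x = \<phi> g2 ` a0" using a0 by blast
      have "\<phi> (g2 \<otimes> inv g1) ` a = \<phi> (g2 \<otimes> inv g1 \<otimes> g1) ` a0"
        using g1 g2 a0E img_comp by simp
      also have "\<dots> = x" using g1 g2 by (simp add: m_assoc)
      finally show "x \<in> {\<phi> g ` a | g. g \<in> carrier G}" using g1 g2 by blast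
    qed
    show "{\<phi> g ` a | g. g \<in> carrier G} \<subseteq> A"
    proof
      fix x assume "x \<in> {\<phi> g ` a | g. g \<in> carrier G}"
      then obtain g where g: "g \<in> carrier G" "x = \<phi> g ` a" by blast
      have "x = \<phi> (g \<otimes> g1) ` a0" using g g1 a0E img_comp by simp
      thus "x \<in> A" using a0 g g1 by blast
    qed
  qed
  ultimately show ?thesis by blast
qed

lemma orb_nonempty:
  assumes "A \<in> orbits G (fin_subsets E) (set_action \<phi>)"
  shows "\<exists>a. a \<in> A"
proof -
  interpret group G by (rule grp)
  obtain a0 where a0: "a0 \<in> fin_subsets E" "A = {\<phi> g ` a0 | g. g \<in> carrier G}"
    using assms(1) unfolding orbits_def orbit_def set_action_def by blast
  thus ?thesis by blast
qed

end

theorem corollary1: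
  fixes G (structure) and S0 :: "'b set" and \<phi> :: "'a \<Rightarrow> 'b \<Rightarrow> 'b"
  assumes "S0 \<noteq> {}"
    and "group_action G S0 \<phi>"
  shows "(\<forall>A\<in>orbits G (fin_subsets S0) (set_action \<phi>).
            \<forall>B\<in>orbits G (fin_subsets S0) (set_action \<phi>).
              strong_rel A B \<longleftrightarrow> weak_rel A B)
       \<and> partial_order_on (orbits G (fin_subsets S0) (set_action \<phi>))
           {(A, B). A \<in> orbits G (fin_subsets S0) (set_action \<phi>)
                  \<and> B \<in> orbits G (fin_subsets S0) (set_action \<phi>) \<and> strong_rel A B}"
proof -
  interpret group_action G S0 \<phi> by (rule assms(2))
  interpret group G by (rule grp)
  define Orb where "Orb = orbits G (fin_subsets S0) (set_action \<phi>)"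
  have sw: "strong_rel A B \<longleftrightarrow> weak_rel A B" if A: "A \<in> Orb" and B: "B \<in> Orb" for A B
  proof
    assume "strong_rel A B"
    thus "weak_rel A B" using orb_nonempty[of A] A unfolding Orb_def strong_rel_def weak_rel_def by blast
  next
    assume "weak_rel A B"
    then obtain a b where ab: "a \<in> A" "b \<in> B" "a \<subseteq> b" unfolding weak_rel_def by blast
    have oa: "A = {\<phi> g ` a | g. g \<in> carrier G}" using orb_elem[of A a] A ab unfolding Orb_def by blast
    have ob: "B = {\<phi> g ` b | g. g \<in> carrier G}" using orb_elem[of B b] B ab unfolding Orb_def by blast
    show "strong_rel A B" unfolding strong_rel_def
    proof
      fix x assume "x \<in> A"
      then obtain g where "g \<in> carrier G" "x = \<phi> g ` a" using oa by blast
      moreover have "\<phi> g ` a \<subseteq> \<phi> g ` b" using ab by blast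
      ultimately show "\<exists>y\<in>B. x \<subseteq> y" using ob by blast
    qed
  qed
  have po: "partial_order_on Orb {(A, B). A \<in> Orb \<and> B \<in> Orb \<and> strong_rel A B}"
    unfolding partial_order_on_def preorder_on_def refl_on_def trans_def antisym_def
  proof (intro conjI ballI allI impI)
    show "{(A, B). A \<in> Orb \<and> B \<in> Orb \<and> strong_rel A B} \<subseteq> Orb \<times> Orb" by blast
  next
    fix A assume "A \<in> Orb"
    thus "(A, A) \<in> {(A, B). A \<in> Orb \<and> B \<in> Orb \<and> strong_rel A B}" by (auto simp: strong_rel_def)
  next
    fix A B C assume "(A, B) \<in> {(A, B). A \<in> Orb \<and> B \<in> Orb \<and> strong_rel A B}"
      "(B, C) \<in> {(A, B). A \<in> Orb \<and> B \<in> Orb \<and> strong_rel A B}"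
    thus "(A, C) \<in> {(A, B). A \<in> Orb \<and> B \<in> Orb \<and> strong_rel A B}"
      unfolding strong_rel_def by (auto) (meson order_trans)
  next
    fix A B assume h: "(A, B) \<in> {(A, B). A \<in> Orb \<and> B \<in> Orb \<and> strong_rel A B}"
      "(B, A) \<in> {(A, B). A \<in> Orb \<and> B \<in> Orb \<and> strong_rel A B}"
    hence A: "A \<in> Orb" and B: "B \<in> Orb" and s1: "strong_rel A B" and s2: "strong_rel B A" by auto
    obtain a where a: "a \<in> A" using orb_nonempty[of A] A unfolding Orb_def by blast
    obtain b where b: "b \<in> B" "a \<subseteq> b" using s1 a unfolding strong_rel_def by blast
    obtain a' where a': "a' \<in> A" "b \<subseteq> a'" using s2 b unfolding strong_rel_def by blast
    have oa: "a \<in> fin_subsets S0 \<and> A = {\<phi> g ` a | g. g \<in> carrier G}"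
      using orb_elem[of A a] A a unfolding Orb_def by blast
    have ob: "B = {\<phi> g ` b | g. g \<in> carrier G}" using orb_elem[of B b] B b unfolding Orb_def by blast
    obtain g where g: "g \<in> carrier G" "a' = \<phi> g ` a" using oa a' by blast
    have fa: "finite a" using oa by (simp add: fin_subsets_def)
    have "card a' \<le> card a" using g fa card_image_le by blast
    moreover have fa': "finite a'" using g fa by simp
    moreover have "card b \<le> card a'" using fa' a' card_mono by blast
    moreover have "finite b" using fa' a' finite_subset by blast
    moreover have "card a \<le> card b" using b \<open>finite b\<close> card_mono by blast
    ultimately have "card a = card b" by linarith
    hence "a = b" using b \<open>finite b\<close> card_subset_eq by blast
    thus "A = B" using oa ob by simp
  qed
  show ?thesis using sw po unfolding Orb_def by blast
qed

end
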